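(* Let $\mathbb{K}=\mathbb{R}$ or $\mathbb{C}$, $G=(g_1,\ldots,g_r)$ a random vector in $\mathbb{K}^r$ with $\mathbb{E}e^{\alpha\sum_{i}|g_i|^2}<\infty$ for some $\alpha>0$, and $(G(k)=(g_1(k),\ldots,g_r(k)))_{k\ge1}$ i.i.d. copies. Let $X_n$ be deterministic real diagonal with eigenvalues $\lambda_1^n\ge\cdots\ge\lambda_n^n$ such that $\frac1n\sum_i\delta_{\lambda_i^n}$ converges weakly to a compactly supported probability measure $\mu$ whose support has bounds $a\le b$, and $\lambda_1^n\to b$, $\lambda_n^n\to a$. Let $\mathcal K$ be a compact interval in $(b,\infty)$ and fix $\varepsilon\in(0,1)$ such that for all $n$ large enough, $z-\lambda_i^n>\varepsilon$ for all $z\in\mathcal K$ and $1\le i\le n$. For $L>0$ let $$\mathcal C_{\mathcal K,L}=\Big\{(K,C)\in\mathcal C(\mathcal K,\mathsf H_r)\times\mathsf H_r:\ \sup_{z\in\mathcal K}\|K(z)\|_2+\|C\|_2\le L,\ K\text{ is }\tfrac{L}{2\varepsilon}\text{-Lipschitz}\Big\}.$$ Then $$\limsup_{L\to\infty}\limsup_{n\to\infty}\frac1n\log\mathbb{P}\big(((K^n(z))_{z\in\mathcal K},C^n)\notin\mathcal C_{\mathcal K,L}\big)=-\infty.$$ In particular the law of $((K^n(z))_{z\in\mathcal K},C^n)$ is exponentially tight for the uniform topology on $\mathcal C(\mathcal K,\mathsf H_r)\times\mathsf H_r$.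
   Context: $\mathsf H_r$: $r\times r$ Hermitian (real symmetric if $\mathbb{K}=\mathbb{R}$) matrices; $\|M\|_2=\sqrt{\operatorname{Tr}(M^2)}$, and the Lipschitz property is with respect to $\|\cdot\|_2$. $K^n(z)_{ij}=\frac1n\sum_{k=1}^n\frac{\overline{g_i(k)}g_j(k)}{z-\lambda_k^n}$, $C^n_{ij}=\frac1n\sum_{k=1}^n\overline{g_i(k)}g_j(k)$. The uniform topology is given by $\sup_z\|K_1(z)-K_2(z)\|_2+\|C_1-C_2\|_2$. Exponential tightness: for every $M$ there is a compact set $\mathcal C$ with $\limsup_n\frac1n\log\mathbb{P}(\cdot\notin\mathcal C)\le -M$. *)

theory Defs
  imports "HOL-Probability.Probability"
begin

text \<open>Hermitian r x r complex matrices (real symmetric ones are the special case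
of real entries). The norm on complex^'r^'r is the Frobenius norm
sqrt (sum |M_ij|^2) = sqrt (Tr (M^2)) for Hermitian M.\<close>

definition hermitian :: "complex ^'r ^'r \<Rightarrow> bool" where
  "hermitian M \<longleftrightarrow> (\<forall>i j. M $ i $ j = cnj (M $ j $ i))"

definition measure_support :: "real measure \<Rightarrow> real set" where
  "measure_support \<mu> = {x. \<forall>e>0. emeasure \<mu> (ball x e) > 0}"

definition Kmat :: "(nat \<Rightarrow> 'a \<Rightarrow> complex ^'r) \<Rightarrow> (nat \<Rightarrow> nat \<Rightarrow> real) \<Rightarrow> nat \<Rightarrow> real \<Rightarrow> 'a \<Rightarrow> complex ^'r ^'r" where
  "Kmat G lam n z \<omega> = (\<chi> i j. (1 / of_nat n) *
      (\<Sum>k=1..n. cnj (G k \<omega> $ i) * (G k \<omega> $ j) / complex_of_real (z - lam n k)))"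

definition Cmat :: "(nat \<Rightarrow> 'a \<Rightarrow> complex ^'r) \<Rightarrow> nat \<Rightarrow> 'a \<Rightarrow> complex ^'r ^'r" where
  "Cmat G n \<omega> = (\<chi> i j. (1 / of_nat n) * (\<Sum>k=1..n. cnj (G k \<omega> $ i) * (G k \<omega> $ j)))"

text \<open>The space C([c,d], H_r) x H_r (functions are only looked at on [c,d]).\<close>
definition CH_space :: "real \<Rightarrow> real \<Rightarrow> ((real \<Rightarrow> complex ^'r ^'r) \<times> (complex ^'r ^'r)) set" where
  "CH_space c d = {(K, C). continuous_on {c..d} K \<and> (\<forall>z\<in>{c..d}. hermitian (K z)) \<and> hermitian C}"

definition CKL :: "real \<Rightarrow> real \<Rightarrow> real \<Rightarrow> real \<Rightarrow> ((real \<Rightarrow> complex ^'r ^'r) \<times> (complex ^'r ^'r)) set" where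
  "CKL c d eps L = {(K, C). (K, C) \<in> CH_space c d \<and>
      (SUP z\<in>{c..d}. norm (K z)) + norm C \<le> L \<and>
      (L / (2 * eps))-lipschitz_on {c..d} K}"

definition unif_dist :: "real \<Rightarrow> real \<Rightarrow> ((real \<Rightarrow> complex ^'r ^'r) \<times> (complex ^'r ^'r)) \<Rightarrow> ((real \<Rightarrow> complex ^'r ^'r) \<times> (complex ^'r ^'r)) \<Rightarrow> real" where
  "unif_dist c d p q = (SUP z\<in>{c..d}. norm (fst p z - fst q z)) + norm (snd p - snd q)"

definition unif_compact :: "real \<Rightarrow> real \<Rightarrow> ((real \<Rightarrow> complex ^'r ^'r) \<times> (complex ^'r ^'r)) set \<Rightarrow> bool" where
  "unif_compact c d S \<longleftrightarrow> S \<subseteq> CH_space c d \<and>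
     (\<forall>s. (\<forall>n. s n \<in> S) \<longrightarrow> (\<exists>l\<in>S. \<exists>\<phi>::nat\<Rightarrow>nat. strict_mono \<phi> \<and>
        (\<lambda>n. unif_dist c d (s (\<phi> n)) l) \<longlonglongrightarrow> 0))"

definition log_rate :: "nat \<Rightarrow> real \<Rightarrow> ereal" where
  "log_rate n p = (if p = 0 then -\<infinity> else ereal (ln p / real n))"

end

theory Submission
  imports Defs "HOL-Complex_Analysis.Great_Picard"
begin


definition outer :: "complex ^'r \<Rightarrow> complex ^'r ^'r" where
  "outer g = (\<chi> i j. cnj (g $ i) * g $ j)"

lemma norm_outer: "norm (outer g) = (norm g)\<^sup>2"
proof -
  have row: "norm (outer g $ i) = norm g * cmod (g $ i)" for i
  proof -
    have "norm (outer g $ i) = L2_set (\<lambda>j. cmod (g $ i) * cmod (g $ j)) UNIV"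
      by (simp add: outer_def norm_vec_def norm_mult)
    also have "\<dots> = cmod (g $ i) * norm g"
      by (simp add: L2_set_right_distrib norm_vec_def)
    finally show ?thesis by simp
  qed
  have "norm (outer g) = L2_set (\<lambda>i. norm g * cmod (g $ i)) UNIV"
    unfolding norm_vec_def[of "outer g"] row ..
  also have "\<dots> = norm g * norm g"
    by (simp add: L2_set_right_distrib[symmetric] norm_vec_def)
  finally show ?thesis by (simp add: power2_eq_square)
qed

lemma hermitian_outer_sum: "hermitian (\<Sum>k\<in>A. r k *\<^sub>R outer (g k))"
  unfolding hermitian_def outer_def
  by (simp add: vector_scaleR_component) (simp add: scaleR_conv_of_real mult.commute)

lemma Kmat_eq: "Kmat G lam n z \<omega> = (\<Sum>k=1..n. ((1 / real n) / (z - lam n k)) *\<^sub>R outer (G k \<omega>))"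
  unfolding Kmat_def outer_def
  by (simp add: vec_eq_iff vector_scaleR_component sum_distrib_left) (simp add: scaleR_conv_of_real field_simps)

lemma Cmat_eq: "Cmat G n \<omega> = (\<Sum>k=1..n. (1 / real n) *\<^sub>R outer (G k \<omega>))"
  unfolding Cmat_def outer_def
  by (simp add: vec_eq_iff vector_scaleR_component sum_distrib_left) (simp add: scaleR_conv_of_real field_simps)

lemma norm_sum_outer: "norm (\<Sum>k\<in>A. r k *\<^sub>R outer (g k)) \<le> (\<Sum>k\<in>A. \<bar>r k\<bar> * (norm (g k))\<^sup>2)"
  by (rule order_trans[OF norm_sum]) (simp add: norm_outer)

lemma inv_diff_bound:
  fixes z z' l eps :: real
  assumes "z - l > eps" "z' - l > eps" "eps > 0"
  shows "\<bar>1 / (z - l) - 1 / (z' - l)\<bar> \<le> \<bar>z - z'\<bar> / eps\<^sup>2"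
proof -
  have p: "z - l > 0" "z' - l > 0" using assms by auto
  have "1 / (z - l) - 1 / (z' - l) = (z' - z) / ((z - l) * (z' - l))"
    using p by (simp add: field_simps)
  hence "\<bar>1 / (z - l) - 1 / (z' - l)\<bar> = \<bar>z' - z\<bar> / ((z - l) * (z' - l))"
    using p by (simp add: abs_divide)
  also have "\<dots> = \<bar>z - z'\<bar> / ((z - l) * (z' - l))" by (simp add: abs_minus_commute)
  also have "\<dots> \<le> \<bar>z - z'\<bar> / eps\<^sup>2"
  proof (rule divide_left_mono)
    show "eps\<^sup>2 \<le> (z - l) * (z' - l)" unfolding power2_eq_square
      using assms by (intro mult_mono) auto
    show "0 \<le> \<bar>z - z'\<bar>" by simp
    show "0 < (z - l) * (z' - l) * eps\<^sup>2" using p assms(3) by simp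
  qed
  finally show ?thesis .
qed

lemma in_CKL:
  fixes G :: "nat \<Rightarrow> 'a \<Rightarrow> complex ^'r"
  assumes gapn: "\<forall>z\<in>{c..d}. \<forall>i\<in>{1..n}. z - lam n i > eps"
    and eps: "0 < eps" "eps < 1" and cd: "c \<le> d" and n: "n \<ge> 1"
    and small: "(\<Sum>k=1..n. (norm (G k \<omega>))\<^sup>2) \<le> eps * L / 2 * real n"
  shows "((\<lambda>z. Kmat G lam n z \<omega>), Cmat G n \<omega>) \<in> CKL c d eps L"
proof -
  define T where "T = (\<Sum>k=1..n. (norm (G k \<omega>))\<^sup>2) / real n"
  have T0: "T \<ge> 0" unfolding T_def by (rule divide_nonneg_nonneg) (simp_all add: sum_nonneg)
  have TL: "T \<le> eps * L / 2" using small n unfolding T_def by (simp add: field_simps)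
  have "0 \<le> eps * L" using T0 TL by linarith
  hence L0: "L \<ge> 0" using eps by (simp add: zero_le_mult_iff)
  have Tsum: "(\<Sum>k=1..n. c' * (norm (G k \<omega>))\<^sup>2 / real n) = c' * T" for c'
    unfolding T_def by (simp add: sum_divide_distrib sum_distrib_left)
  have Kb: "norm (Kmat G lam n z \<omega>) \<le> T / eps" if z: "z \<in> {c..d}" for z
  proof -
    have "norm (Kmat G lam n z \<omega>) \<le> (\<Sum>k=1..n. \<bar>(1 / real n) / (z - lam n k)\<bar> * (norm (G k \<omega>))\<^sup>2)"
      unfolding Kmat_eq by (rule norm_sum_outer)
    also have "\<dots> \<le> (\<Sum>k=1..n. (1 / eps) * (norm (G k \<omega>))\<^sup>2 / real n)"
    proof (rule sum_mono)
      fix k assume k: "k \<in> {1..n}"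
      have zl: "z - lam n k > eps" using gapn z k by auto
      have "\<bar>(1 / real n) / (z - lam n k)\<bar> = (1 / (z - lam n k)) / real n"
        using zl eps by simp
      also have "\<dots> \<le> (1 / eps) / real n"
        using zl eps by (intro divide_right_mono divide_left_mono) auto
      finally have h: "\<bar>(1 / real n) / (z - lam n k)\<bar> \<le> (1 / eps) / real n" .
      have "\<bar>(1 / real n) / (z - lam n k)\<bar> * (norm (G k \<omega>))\<^sup>2 \<le> (1 / eps) / real n * (norm (G k \<omega>))\<^sup>2"
        by (rule mult_right_mono[OF h]) simp
      thus "\<bar>(1 / real n) / (z - lam n k)\<bar> * (norm (G k \<omega>))\<^sup>2 \<le> (1 / eps) * (norm (G k \<omega>))\<^sup>2 / real n"
        by simp
    qed
    also have "\<dots> = (1 / eps) * T" by (simp only: Tsum)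
    also have "\<dots> = T / eps" by simp
    finally show ?thesis .
  qed
  have Cb: "norm (Cmat G n \<omega>) \<le> T"
  proof -
    have "norm (Cmat G n \<omega>) \<le> (\<Sum>k=1..n. \<bar>1 / real n\<bar> * (norm (G k \<omega>))\<^sup>2)"
      unfolding Cmat_eq by (rule norm_sum_outer)
    also have "\<dots> = (\<Sum>k=1..n. 1 * (norm (G k \<omega>))\<^sup>2 / real n)" by simp
    also have "\<dots> = T" using Tsum[of 1] by (simp only: mult_1)
    finally show ?thesis .
  qed
  have SUPb: "(SUP z\<in>{c..d}. norm (Kmat G lam n z \<omega>)) \<le> T / eps"
    using cd by (intro cSUP_least) (auto intro: Kb)
  have "T / eps + T \<le> L"
  proof -
    have "T / eps + T = T * (1 + eps) / eps" using eps by (simp add: field_simps)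
    also have "\<dots> \<le> (eps * L / 2) * (1 + eps) / eps"
      using TL eps by (intro divide_right_mono mult_right_mono) auto
    also have "\<dots> = L * (1 + eps) / 2" using eps by (simp add: field_simps)
    also have "\<dots> \<le> L * 2 / 2" using eps L0 by (intro divide_right_mono mult_left_mono) auto
    also have "\<dots> = L" by simp
    finally show ?thesis .
  qed
  hence bound: "(SUP z\<in>{c..d}. norm (Kmat G lam n z \<omega>)) + norm (Cmat G n \<omega>) \<le> L"
    using SUPb Cb by linarith
  have lip: "(L / (2 * eps))-lipschitz_on {c..d} (\<lambda>z. Kmat G lam n z \<omega>)"
  proof (rule lipschitz_onI)
    show "0 \<le> L / (2 * eps)" using L0 eps by simp
    fix z z' assume z: "z \<in> {c..d}" and z': "z' \<in> {c..d}"
    have eqd: "Kmat G lam n z \<omega> - Kmat G lam n z' \<omega> =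
        (\<Sum>k=1..n. ((1 / real n) / (z - lam n k) - (1 / real n) / (z' - lam n k)) *\<^sub>R outer (G k \<omega>))"
      unfolding Kmat_eq by (simp only: scaleR_diff_left sum_subtractf)
    have "dist (Kmat G lam n z \<omega>) (Kmat G lam n z' \<omega>) \<le>
        (\<Sum>k=1..n. \<bar>(1 / real n) / (z - lam n k) - (1 / real n) / (z' - lam n k)\<bar> * (norm (G k \<omega>))\<^sup>2)"
      unfolding dist_norm eqd by (rule norm_sum_outer)
    also have "\<dots> \<le> (\<Sum>k=1..n. (\<bar>z - z'\<bar> / eps\<^sup>2) * (norm (G k \<omega>))\<^sup>2 / real n)"
    proof (rule sum_mono)
      fix k assume k: "k \<in> {1..n}"
      have h1: "\<bar>1 / (z - lam n k) - 1 / (z' - lam n k)\<bar> \<le> \<bar>z - z'\<bar> / eps\<^sup>2"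
        using gapn z z' k eps by (intro inv_diff_bound) auto
      have h2: "\<bar>(1 / real n) / (z - lam n k) - (1 / real n) / (z' - lam n k)\<bar>
          = \<bar>1 / (z - lam n k) - 1 / (z' - lam n k)\<bar> / real n"
      proof -
        have "(1 / real n) / (z - lam n k) - (1 / real n) / (z' - lam n k) = (1 / (z - lam n k) - 1 / (z' - lam n k)) / real n"
          by (simp add: diff_divide_distrib mult.commute)
        thus ?thesis by (simp add: abs_divide)
      qed
      have "\<bar>1 / (z - lam n k) - 1 / (z' - lam n k)\<bar> / real n * (norm (G k \<omega>))\<^sup>2
          \<le> (\<bar>z - z'\<bar> / eps\<^sup>2) / real n * (norm (G k \<omega>))\<^sup>2"
        by (intro mult_right_mono divide_right_mono h1) auto
      thus "\<bar>(1 / real n) / (z - lam n k) - (1 / real n) / (z' - lam n k)\<bar> * (norm (G k \<omega>))\<^sup>2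
          \<le> (\<bar>z - z'\<bar> / eps\<^sup>2) * (norm (G k \<omega>))\<^sup>2 / real n"
        unfolding h2 by simp
    qed
    also have "\<dots> = (\<bar>z - z'\<bar> / eps\<^sup>2) * T" by (simp only: Tsum)
    also have "\<dots> \<le> (\<bar>z - z'\<bar> / eps\<^sup>2) * (eps * L / 2)"
      using TL by (intro mult_left_mono) auto
    also have "\<dots> = L / (2 * eps) * dist z z'"
      using eps by (simp add: dist_real_def power2_eq_square field_simps)
    finally show "dist (Kmat G lam n z \<omega>) (Kmat G lam n z' \<omega>) \<le> L / (2 * eps) * dist z z'" .
  qed
  have herm: "\<forall>z\<in>{c..d}. hermitian (Kmat G lam n z \<omega>)" "hermitian (Cmat G n \<omega>)"
    unfolding Kmat_eq Cmat_eq by (auto intro: hermitian_outer_sum)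
  show ?thesis
    unfolding CKL_def CH_space_def
    using lipschitz_on_continuous_on[OF lip] herm bound lip by auto
qed



lemma chernoff:
  fixes G :: "nat \<Rightarrow> 'a \<Rightarrow> complex ^'r" and M :: "'a measure"
  assumes P: "prob_space M" and meas: "\<And>k. G k \<in> borel_measurable M"
    and indep: "prob_space.indep_vars M (\<lambda>_. borel) G {1..}"
    and ident: "\<And>k. k \<ge> 1 \<Longrightarrow> distr M borel (G k) = distr M borel (G 1)"
    and alpha: "\<alpha> > 0" and int1: "integrable M (\<lambda>\<omega>. exp (\<alpha> * (norm (G 1 \<omega>))\<^sup>2))"
  shows "measure M {\<omega>\<in>space M. t \<le> (\<Sum>k=1..n. (norm (G k \<omega>))\<^sup>2)}
         \<le> (\<integral>\<omega>. exp (\<alpha> * (norm (G 1 \<omega>))\<^sup>2) \<partial>M) ^ n / exp (\<alpha> * t)"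
proof -
  interpret prob_space M by (rule P)
  define f where "f x = exp (\<alpha> * (norm (x::complex^'r))\<^sup>2)" for x
  have fb[measurable]: "f \<in> borel_measurable borel" unfolding f_def by measurable
  note meas[measurable]
  have intk: "integrable M (\<lambda>\<omega>. f (G k \<omega>))" if "k \<ge> 1" for k
  proof -
    have "integrable (distr M borel (G 1)) f"
      using int1 by (subst integrable_distr_eq) (auto simp: f_def)
    hence "integrable (distr M borel (G k)) f" using ident[OF that] by simp
    thus ?thesis by (subst (asm) integrable_distr_eq) auto
  qed
  have intk_eq: "(\<integral>\<omega>. f (G k \<omega>) \<partial>M) = (\<integral>\<omega>. f (G 1 \<omega>) \<partial>M)" if "k \<ge> 1" for k
  proof -
    have "(\<integral>\<omega>. f (G k \<omega>) \<partial>M) = integral\<^sup>L (distr M borel (G k)) f"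
      by (subst integral_distr) auto
    also have "\<dots> = integral\<^sup>L (distr M borel (G 1)) f" using ident[OF that] by simp
    also have "\<dots> = (\<integral>\<omega>. f (G 1 \<omega>) \<partial>M)" by (subst integral_distr) auto
    finally show ?thesis .
  qed
  have ind: "indep_vars (\<lambda>_. borel) (\<lambda>k \<omega>. f (G k \<omega>)) {1..n}"
  proof -
    have "indep_vars (\<lambda>_. borel) G {1..n}"
      using indep by (rule indep_vars_subset) auto
    thus ?thesis by (rule indep_vars_compose2) simp
  qed
  define u where "u \<omega> = (\<Prod>k\<in>{1..n}. f (G k \<omega>))" for \<omega>
  have uint: "integrable M u" unfolding u_def
    by (rule indep_vars_integrable) (use ind intk in auto)
  have uI: "(\<integral>\<omega>. u \<omega> \<partial>M) = (\<integral>\<omega>. f (G 1 \<omega>) \<partial>M) ^ n"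
  proof -
    have "(\<integral>\<omega>. u \<omega> \<partial>M) = (\<Prod>k\<in>{1..n}. \<integral>\<omega>. f (G k \<omega>) \<partial>M)" unfolding u_def
      by (rule indep_vars_lebesgue_integral) (use ind intk in auto)
    also have "\<dots> = (\<Prod>k\<in>{1..n}. \<integral>\<omega>. f (G 1 \<omega>) \<partial>M)"
      by (rule prod.cong) (rule refl, rule intk_eq, simp)
    finally show ?thesis by simp
  qed
  have ueq: "u \<omega> = exp (\<alpha> * (\<Sum>k=1..n. (norm (G k \<omega>))\<^sup>2))" for \<omega>
    unfolding u_def f_def by (simp add: exp_sum sum_distrib_left)
  have "{\<omega>\<in>space M. t \<le> (\<Sum>k=1..n. (norm (G k \<omega>))\<^sup>2)} = {\<omega>\<in>space M. u \<omega> \<ge> exp (\<alpha> * t)}"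
    using alpha by (simp add: ueq mult_le_cancel_left_pos)
  also have "measure M \<dots> \<le> (\<integral>\<omega>. u \<omega> \<partial>M) / exp (\<alpha> * t)"
    by (rule integral_Markov_inequality_measure[OF uint, of "space M"]) (auto simp: ueq)
  finally show ?thesis unfolding uI f_def .
qed



lemma hermitian_closed:
  assumes h: "\<And>n. hermitian (X n)" and lim: "X \<longlonglongrightarrow> l"
  shows "hermitian l"
  unfolding hermitian_def
proof (intro allI)
  fix i j
  have "(\<lambda>n. X n $ i $ j) \<longlonglongrightarrow> l $ i $ j" by (intro tendsto_vec_nth lim)
  moreover have "(\<lambda>n. X n $ i $ j) \<longlonglongrightarrow> cnj (l $ j $ i)"
  proof -
    have "(\<lambda>n. cnj (X n $ j $ i)) \<longlonglongrightarrow> cnj (l $ j $ i)" by (intro tendsto_cnj tendsto_vec_nth lim)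
    moreover have "(\<lambda>n. cnj (X n $ j $ i)) = (\<lambda>n. X n $ i $ j)"
      using h unfolding hermitian_def by metis
    ultimately show ?thesis by simp
  qed
  ultimately show "l $ i $ j = cnj (l $ j $ i)" by (rule LIMSEQ_unique)
qed

lemma bdd_norm_cont:
  fixes K :: "real \<Rightarrow> 'b::real_normed_vector"
  assumes "continuous_on {c..d} K"
  shows "bdd_above ((\<lambda>z. norm (K z)) ` {c..d})"
proof -
  have "continuous_on {c..d} (\<lambda>z. norm (K z))" using assms by (intro continuous_intros)
  hence "compact ((\<lambda>z. norm (K z)) ` {c..d})" by (rule compact_continuous_image) simp
  thus ?thesis by (intro bounded_imp_bdd_above compact_imp_bounded)
qed

lemma CKL_compact:
  assumes eps: "0 < eps" and cd: "c \<le> d" and L0: "0 \<le> L"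
  shows "unif_compact c d (CKL c d eps L :: ((real \<Rightarrow> complex^'r^'r) \<times> (complex^'r^'r)) set)"
  unfolding unif_compact_def
proof (intro conjI allI impI)
  show "CKL c d eps L \<subseteq> CH_space c d" unfolding CKL_def by auto
  fix s :: "nat \<Rightarrow> (real \<Rightarrow> complex^'r^'r) \<times> (complex^'r^'r)" assume sS: "\<forall>n. s n \<in> CKL c d eps L"
  define K where "K n = fst (s n)" for n
  define C where "C n = snd (s n)" for n
  define Lc where "Lc = L / (2 * eps)"
  have Lc0: "Lc \<ge> 0" unfolding Lc_def using eps L0 by simp
  have sK: "s n = (K n, C n)" for n unfolding K_def C_def by simp
  have cont: "continuous_on {c..d} (K n)"
    and hK: "\<And>z. z \<in> {c..d} \<Longrightarrow> hermitian (K n z)"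
    and hC: "hermitian (C n)"
    and bnd: "(SUP z\<in>{c..d}. norm (K n z)) + norm (C n) \<le> L"
    and lip: "Lc-lipschitz_on {c..d} (K n)" for n
    using sS[rule_format, of n] unfolding sK CKL_def CH_space_def Lc_def by auto
  have ptb: "norm (K n z) + norm (C n) \<le> L" if "z \<in> {c..d}" for n z
  proof -
    have "norm (K n z) \<le> (SUP z\<in>{c..d}. norm (K n z))"
      by (rule cSUP_upper[OF that bdd_norm_cont[OF cont]])
    thus ?thesis using bnd[of n] by linarith
  qed
  have Kb: "norm (K n z) \<le> L" if "z \<in> {c..d}" for n z using ptb[OF that, of n] norm_ge_zero[of "C n"] by linarith
  have cc: "c \<in> {c..d}" using cd by simp
  have Cb: "norm (C n) \<le> L" for n using ptb[OF cc, of n] norm_ge_zero[of "K n c"] by linarith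
  have Kl: "dist (K n z) (K n z') \<le> Lc * dist z z'" if "z \<in> {c..d}" "z' \<in> {c..d}" for n z z'
    using lip[of n] that unfolding lipschitz_on_def by auto
  obtain g k1 where gc: "continuous_on {c..d} g" and k1: "strict_mono (k1 :: nat \<Rightarrow> nat)"
    and unif: "\<And>e. 0 < e \<Longrightarrow> \<exists>N. \<forall>n x. n \<ge> N \<and> x \<in> {c..d} \<longrightarrow> norm (K (k1 n) x - g x) < e"
  proof (rule Arzela_Ascoli[of "{c..d}" K L])
    show "compact {c..d}" by simp
    show "\<And>n x. x \<in> {c..d} \<Longrightarrow> norm (K n x) \<le> L" by (rule Kb)
    fix x e assume x: "x \<in> {c..d}" and e: "(0::real) < e"
    show "\<exists>\<delta>>0. \<forall>n y. y \<in> {c..d} \<and> norm (x - y) < \<delta> \<longrightarrow> norm (K n x - K n y) < e"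
    proof (intro exI[of _ "e / (Lc + 1)"] conjI allI impI)
      show "0 < e / (Lc + 1)" using e Lc0 by simp
      fix n y assume y: "y \<in> {c..d} \<and> norm (x - y) < e / (Lc + 1)"
      have "norm (K n x - K n y) \<le> Lc * norm (x - y)"
        using Kl[OF x, of y n] y by (simp add: dist_norm)
      also have "\<dots> \<le> Lc * (e / (Lc + 1))" using y Lc0 by (intro mult_left_mono) auto
      also have "\<dots> < e" using e Lc0 by (simp add: field_simps)
      finally show "norm (K n x - K n y) < e" .
    qed
  qed auto
  have "seq_compact (cball (0::complex^'r^'r) L)" by (intro compact_imp_seq_compact compact_cball)
  then obtain C0 k2 where C0: "C0 \<in> cball 0 L" and k2: "strict_mono (k2 :: nat \<Rightarrow> nat)"
    and Clim: "((\<lambda>n. C (k1 n)) \<circ> k2) \<longlonglongrightarrow> C0"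
    by (rule seq_compactE) (use Cb in auto)
  define \<phi> where "\<phi> = k1 \<circ> k2"
  have phi: "strict_mono \<phi>" unfolding \<phi>_def using k1 k2 by (rule strict_mono_o)
  have Clim': "(\<lambda>n. C (\<phi> n)) \<longlonglongrightarrow> C0" using Clim unfolding \<phi>_def comp_def .
  have unif': "\<exists>N. \<forall>n x. n \<ge> N \<and> x \<in> {c..d} \<longrightarrow> norm (K (\<phi> n) x - g x) < e" if e: "0 < e" for e
  proof -
    obtain N where N: "\<forall>n x. n \<ge> N \<and> x \<in> {c..d} \<longrightarrow> norm (K (k1 n) x - g x) < e"
      using unif[OF e] by blast
    show ?thesis
    proof (intro exI[of _ N] allI impI)
      fix n x assume "N \<le> n \<and> x \<in> {c..d}"
      moreover have "n \<le> k2 n" using k2 by (rule seq_suble)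
      ultimately show "norm (K (\<phi> n) x - g x) < e" using N unfolding \<phi>_def by auto
    qed
  qed
  have Klim: "(\<lambda>n. K (\<phi> n) z) \<longlonglongrightarrow> g z" if z: "z \<in> {c..d}" for z
  proof (rule LIMSEQ_I)
    fix e :: real assume "0 < e"
    then obtain N where "\<forall>n x. n \<ge> N \<and> x \<in> {c..d} \<longrightarrow> norm (K (\<phi> n) x - g x) < e"
      using unif' by blast
    thus "\<exists>no. \<forall>n\<ge>no. norm (K (\<phi> n) z - g z) < e" using z by blast
  qed
  define l where "l = (g, C0)"
  have lS: "l \<in> CKL c d eps L"
  proof -
    have hg: "\<forall>z\<in>{c..d}. hermitian (g z)"
      using hermitian_closed[OF hK Klim] by blast
    have hC0: "hermitian C0" by (rule hermitian_closed[OF hC Clim'])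
    have pt: "norm (g z) + norm C0 \<le> L" if z: "z \<in> {c..d}" for z
    proof (rule LIMSEQ_le_const2)
      show "(\<lambda>n. norm (K (\<phi> n) z) + norm (C (\<phi> n))) \<longlonglongrightarrow> norm (g z) + norm C0"
        by (intro tendsto_add tendsto_norm Klim[OF z] Clim')
      show "\<exists>N. \<forall>n\<ge>N. norm (K (\<phi> n) z) + norm (C (\<phi> n)) \<le> L" using ptb[OF z] by blast
    qed
    have "(SUP z\<in>{c..d}. norm (g z)) \<le> L - norm C0"
      using cd pt by (intro cSUP_least) force+
    hence b: "(SUP z\<in>{c..d}. norm (g z)) + norm C0 \<le> L" by simp
    have lg: "Lc-lipschitz_on {c..d} g"
    proof (rule lipschitz_onI[OF _ Lc0])
      fix z z' assume z: "z \<in> {c..d}" and z': "z' \<in> {c..d}"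
      show "dist (g z) (g z') \<le> Lc * dist z z'"
      proof (rule LIMSEQ_le_const2)
        show "(\<lambda>n. dist (K (\<phi> n) z) (K (\<phi> n) z')) \<longlonglongrightarrow> dist (g z) (g z')"
          by (intro tendsto_dist Klim z z')
        show "\<exists>N. \<forall>n\<ge>N. dist (K (\<phi> n) z) (K (\<phi> n) z') \<le> Lc * dist z z'"
          using Kl[OF z z'] by blast
      qed
    qed
    show ?thesis unfolding l_def CKL_def CH_space_def
      using gc hg hC0 b lg unfolding Lc_def by auto
  qed
  have conv: "(\<lambda>n. unif_dist c d (s (\<phi> n)) l) \<longlonglongrightarrow> 0"
  proof (rule LIMSEQ_I)
    fix e :: real assume e: "0 < e"
    obtain N1 where N1: "\<forall>n x. n \<ge> N1 \<and> x \<in> {c..d} \<longrightarrow> norm (K (\<phi> n) x - g x) < e / 2"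
      using unif'[of "e/2"] e by auto
    obtain N2 where N2: "\<forall>n\<ge>N2. norm (C (\<phi> n) - C0) < e / 2"
      using LIMSEQ_D[OF Clim', of "e/2"] e by (auto simp: dist_norm)
    show "\<exists>no. \<forall>n\<ge>no. norm (unif_dist c d (s (\<phi> n)) l - 0) < e"
    proof (intro exI[of _ "max N1 N2"] allI impI)
      fix n assume n: "max N1 N2 \<le> n"
      have pts: "norm (K (\<phi> n) x - g x) < e / 2" if "x \<in> {c..d}" for x using N1 n that by auto
      have bdd: "bdd_above ((\<lambda>z. norm (K (\<phi> n) z - g z)) ` {c..d})"
        using pts by (intro bdd_aboveI2[of _ _ "e/2"]) (auto intro: less_imp_le)
      have sup_le: "(SUP z\<in>{c..d}. norm (K (\<phi> n) z - g z)) \<le> e / 2"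
        using cd pts by (intro cSUP_least) (auto intro: less_imp_le)
      have sup_ge: "0 \<le> (SUP z\<in>{c..d}. norm (K (\<phi> n) z - g z))"
        using cSUP_upper[OF cc bdd] norm_ge_zero[of "K (\<phi> n) c - g c"] by linarith
      have cn: "norm (C (\<phi> n) - C0) < e / 2" using N2 n by auto
      have ud: "unif_dist c d (s (\<phi> n)) l = (SUP z\<in>{c..d}. norm (K (\<phi> n) z - g z)) + norm (C (\<phi> n) - C0)"
        unfolding unif_dist_def l_def sK by simp
      show "norm (unif_dist c d (s (\<phi> n)) l - 0) < e"
        unfolding ud using sup_le sup_ge cn by simp
    qed
  qed
  show "\<exists>l\<in>CKL c d eps L. \<exists>\<phi>::nat\<Rightarrow>nat. strict_mono \<phi> \<and> (\<lambda>n. unif_dist c d (s (\<phi> n)) l) \<longlonglongrightarrow> 0"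
    using lS phi conv by blast
qed


lemma measure_mono_any:
  assumes "finite_measure M" "B \<in> sets M" "A \<subseteq> B"
  shows "measure M A \<le> measure M B"
proof (cases "A \<in> sets M")
  case True thus ?thesis using assms by (intro finite_measure.finite_measure_mono) auto
next
  case False thus ?thesis by (simp add: measure_notin_sets)
qed

lemma log_rate_le:
  assumes "0 \<le> p" "p \<le> Lam ^ n / exp (\<beta> * real n)" "Lam > 0" "n > 0"
  shows "log_rate n p \<le> ereal (ln Lam - \<beta>)"
proof (cases "p = 0")
  case True thus ?thesis by (simp add: log_rate_def)
next
  case False
  hence p: "p > 0" using assms by simp
  have "ln p \<le> ln (Lam ^ n / exp (\<beta> * real n))"
    using p assms by (subst ln_le_cancel_iff) auto
  also have "\<dots> = real n * ln Lam - \<beta> * real n"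
    using assms by (simp add: ln_div ln_realpow)
  finally have "ln p / real n \<le> ln Lam - \<beta>"
    using assms by (simp add: field_simps)
  thus ?thesis using False by (simp add: log_rate_def)
qed

theorem lemma5p2:
  fixes M :: "'a measure"
    and G :: "nat \<Rightarrow> 'a \<Rightarrow> complex ^'r"
    and lam :: "nat \<Rightarrow> nat \<Rightarrow> real"
    and \<mu> :: "real measure"
    and a b c d eps :: real
  assumes "prob_space M"
    and meas: "\<And>k. G k \<in> borel_measurable M"
    and indep: "prob_space.indep_vars M (\<lambda>_. borel) G {1..}"
    and ident: "\<And>k. k \<ge> 1 \<Longrightarrow> distr M borel (G k) = distr M borel (G 1)"
    and expmom: "\<exists>\<alpha>>0. integrable M (\<lambda>\<omega>. exp (\<alpha> * (\<Sum>i\<in>UNIV. (cmod (G 1 \<omega> $ i))\<^sup>2)))"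
    and decr: "\<And>n i. 1 \<le> i \<Longrightarrow> i < n \<Longrightarrow> lam n i \<ge> lam n (Suc i)"
    and mu_prob: "prob_space \<mu>" and mu_sets: "sets \<mu> = sets borel"
    and weak: "\<And>f::real \<Rightarrow> real. continuous_on UNIV f \<Longrightarrow> bounded (range f) \<Longrightarrow>
         (\<lambda>n. (1 / real n) * (\<Sum>i=1..n. f (lam n i))) \<longlonglongrightarrow> integral\<^sup>L \<mu> f"
    and supp_compact: "compact (measure_support \<mu>)"
    and a_def: "a = Inf (measure_support \<mu>)" and b_def: "b = Sup (measure_support \<mu>)"
    and top: "(\<lambda>n. lam n 1) \<longlonglongrightarrow> b"
    and bot: "(\<lambda>n. lam n n) \<longlonglongrightarrow> a"
    and cd: "b < c" "c \<le> d"
    and eps: "0 < eps" "eps < 1"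
    and gap: "\<forall>\<^sub>F n in sequentially. \<forall>z\<in>{c..d}. \<forall>i\<in>{1..n}. z - lam n i > eps"
  shows "Limsup at_top (\<lambda>L::real. limsup (\<lambda>n. log_rate n
            (measure M {\<omega> \<in> space M. ((\<lambda>z. Kmat G lam n z \<omega>), Cmat G n \<omega>) \<notin> CKL c d eps L})))
           = -\<infinity>
     \<and> (\<forall>B::real. \<exists>S. unif_compact c d S \<and>
          limsup (\<lambda>n. log_rate n
            (measure M {\<omega> \<in> space M. ((\<lambda>z. Kmat G lam n z \<omega>), Cmat G n \<omega>) \<notin> S})) \<le> ereal (- B))"
proof -
  interpret P: prob_space M by fact
  obtain \<alpha> where \<alpha>: "\<alpha> > 0" and int: "integrable M (\<lambda>\<omega>. exp (\<alpha> * (\<Sum>i\<in>UNIV. (cmod (G 1 \<omega> $ i))\<^sup>2)))"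
    using expmom by blast
  have normsq: "(norm (x::complex^'r))\<^sup>2 = (\<Sum>i\<in>UNIV. (cmod (x $ i))\<^sup>2)" for x
    by (simp add: norm_vec_def L2_set_def sum_nonneg)
  have int1: "integrable M (\<lambda>\<omega>. exp (\<alpha> * (norm (G 1 \<omega>))\<^sup>2))"
    using int by (simp add: normsq)
  define Lam where "Lam = (\<integral>\<omega>. exp (\<alpha> * (norm (G 1 \<omega>))\<^sup>2) \<partial>M)"
  have Lam1: "Lam \<ge> 1" unfolding Lam_def
    by (rule P.integral_ge_const[OF int1]) (use \<alpha> in \<open>auto intro!: AE_I2\<close>)
  hence Lam0: "Lam > 0" by simp
  obtain N0 where N0: "\<And>n. n \<ge> N0 \<Longrightarrow> \<forall>z\<in>{c..d}. \<forall>i\<in>{1..n}. z - lam n i > eps"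
    using gap unfolding eventually_sequentially by blast
  define h where "h L = ln Lam - \<alpha> * eps * L / 2" for L
  have rb: "limsup (\<lambda>n. log_rate n
            (measure M {\<omega> \<in> space M. ((\<lambda>z. Kmat G lam n z \<omega>), Cmat G n \<omega>) \<notin> CKL c d eps L})) \<le> ereal (h L)"
    if L: "L > 0" for L
  proof (rule Limsup_bounded, unfold eventually_sequentially, intro exI allI impI)
    fix n assume n: "max N0 1 \<le> n"
    define p where "p = measure M {\<omega> \<in> space M. ((\<lambda>z. Kmat G lam n z \<omega>), Cmat G n \<omega>) \<notin> CKL c d eps L}"
    have "p \<le> measure M {\<omega>\<in>space M. eps * L / 2 * real n \<le> (\<Sum>k=1..n. (norm (G k \<omega>))\<^sup>2)}"
      unfolding p_def
    proof (rule measure_mono_any)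
      show "finite_measure M" by (rule P.finite_measure_axioms)
      show "{\<omega>\<in>space M. eps * L / 2 * real n \<le> (\<Sum>k=1..n. (norm (G k \<omega>))\<^sup>2)} \<in> sets M"
        using meas by measurable
      show "{\<omega> \<in> space M. ((\<lambda>z. Kmat G lam n z \<omega>), Cmat G n \<omega>) \<notin> CKL c d eps L}
          \<subseteq> {\<omega>\<in>space M. eps * L / 2 * real n \<le> (\<Sum>k=1..n. (norm (G k \<omega>))\<^sup>2)}"
      proof safe
        fix \<omega> assume notin: "((\<lambda>z. Kmat G lam n z \<omega>), Cmat G n \<omega>) \<notin> CKL c d eps L"
        show "eps * L / 2 * real n \<le> (\<Sum>k=1..n. (norm (G k \<omega>))\<^sup>2)"
        proof (rule ccontr)
          assume "\<not> ?thesis"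
          hence "(\<Sum>k=1..n. (norm (G k \<omega>))\<^sup>2) \<le> eps * L / 2 * real n" by simp
          hence "((\<lambda>z. Kmat G lam n z \<omega>), Cmat G n \<omega>) \<in> CKL c d eps L"
            using N0[of n] n eps cd by (intro in_CKL) auto
          thus False using notin by simp
        qed
      qed
    qed
    also have "\<dots> \<le> Lam ^ n / exp (\<alpha> * (eps * L / 2 * real n))"
      unfolding Lam_def by (rule chernoff[OF assms(1) meas indep ident \<alpha> int1])
    also have "\<dots> = Lam ^ n / exp ((\<alpha> * eps * L / 2) * real n)" by (simp add: mult_ac)
    finally have "log_rate n p \<le> ereal (ln Lam - \<alpha> * eps * L / 2)"
      using n Lam0 by (intro log_rate_le) (auto simp: p_def)
    thus "log_rate n p \<le> ereal (h L)" by (simp add: h_def)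
  qed
  have hB: "h L \<le> - B" if "L \<ge> max 1 (2 * (ln Lam + B) / (\<alpha> * eps))" for L B
  proof -
    have ae: "\<alpha> * eps > 0" using \<alpha> eps by simp
    have "2 * (ln Lam + B) / (\<alpha> * eps) \<le> L" using that by simp
    hence "2 * (ln Lam + B) \<le> L * (\<alpha> * eps)" using ae by (simp add: divide_le_eq)
    thus ?thesis unfolding h_def by (simp add: field_simps)
  qed
  have part1: "Limsup at_top (\<lambda>L::real. limsup (\<lambda>n. log_rate n
            (measure M {\<omega> \<in> space M. ((\<lambda>z. Kmat G lam n z \<omega>), Cmat G n \<omega>) \<notin> CKL c d eps L})))
           = -\<infinity>"
  proof (rule ereal_bot)
    fix B :: real
    show "Limsup at_top (\<lambda>L::real. limsup (\<lambda>n. log_rate n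
            (measure M {\<omega> \<in> space M. ((\<lambda>z. Kmat G lam n z \<omega>), Cmat G n \<omega>) \<notin> CKL c d eps L}))) \<le> ereal B"
    proof (rule Limsup_bounded, unfold eventually_at_top_linorder, intro exI allI impI)
      fix L :: real assume L: "max 1 (2 * (ln Lam + (- B)) / (\<alpha> * eps)) \<le> L"
      have "limsup (\<lambda>n. log_rate n
            (measure M {\<omega> \<in> space M. ((\<lambda>z. Kmat G lam n z \<omega>), Cmat G n \<omega>) \<notin> CKL c d eps L})) \<le> ereal (h L)"
        using L by (intro rb) auto
      also have "\<dots> \<le> ereal B" using hB[OF L] by simp
      finally show "limsup (\<lambda>n. log_rate n
            (measure M {\<omega> \<in> space M. ((\<lambda>z. Kmat G lam n z \<omega>), Cmat G n \<omega>) \<notin> CKL c d eps L})) \<le> ereal B" .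
    qed
  qed
  have part2: "\<exists>S. unif_compact c d S \<and>
          limsup (\<lambda>n. log_rate n
            (measure M {\<omega> \<in> space M. ((\<lambda>z. Kmat G lam n z \<omega>), Cmat G n \<omega>) \<notin> S})) \<le> ereal (- B)" for B :: real
  proof -
    define L where "L = max 1 (2 * (ln Lam + B) / (\<alpha> * eps))"
    have L1: "L \<ge> 1" unfolding L_def by simp
    show ?thesis
    proof (intro exI conjI)
      show "unif_compact c d (CKL c d eps L :: ((real \<Rightarrow> complex^'r^'r) \<times> (complex^'r^'r)) set)"
        using eps cd L1 by (intro CKL_compact) auto
      have "limsup (\<lambda>n. log_rate n
            (measure M {\<omega> \<in> space M. ((\<lambda>z. Kmat G lam n z \<omega>), Cmat G n \<omega>) \<notin> CKL c d eps L})) \<le> ereal (h L)"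
        using L1 by (intro rb) auto
      also have "\<dots> \<le> ereal (- B)" using hB[of B L] unfolding L_def by simp
      finally show "limsup (\<lambda>n. log_rate n
            (measure M {\<omega> \<in> space M. ((\<lambda>z. Kmat G lam n z \<omega>), Cmat G n \<omega>) \<notin> CKL c d eps L})) \<le> ereal (- B)" .
    qed
  qed
  show ?thesis using part1 part2 by blast
qed

end
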